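(* Let $E$ be the elliptic curve $Y^2+11Y=X^3+11X^2+33X$ over $\mathbb{Q}$ and $t=Y-\frac{11}{X}$. For every point $P\in E(\mathbb{Q})$ other than the point at infinity, $(0,0)$ and $(0,-11)$ (the poles of $t$), we have $\widehat{h}(P)\le \tfrac13 h_t(P)+4.52$.
   Context: For a non-constant function $f$ on $E$ and $P\in E(\mathbb{Q})$ with $f(P)$ finite, $H_f(P)=\prod_{p\le\infty}\max(1,|f(P)|_p)$ (product over all primes and the archimedean place, standard normalized absolute values) and $h_f(P)=\log H_f(P)$. The canonical height is $\widehat{h}(P)=\frac{1}{\deg f}\lim_{n\to\infty} h_f(2^nP)/4^n$ for any even non-constant function $f$, e.g. $f=X$ with $\deg X=2$ (Silverman's normalization). *)

theory Defs
  imports Complex_Main "HOL-Library.Groups_Big_Fun" "HOL-Computational_Algebra.Primes"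
begin

text \<open>Points of E(Q) for a Weierstrass curve; None is the point at infinity.\<close>
type_synonym ept = "(rat \<times> rat) option"

definition a1 :: rat where "a1 = 0"
definition a2 :: rat where "a2 = 11"
definition a3 :: rat where "a3 = 11"
definition a4 :: rat where "a4 = 33"
definition a6 :: rat where "a6 = 0"

definition on_curve :: "ept \<Rightarrow> bool" where
  "on_curve P = (case P of None \<Rightarrow> True
     | Some (x, y) \<Rightarrow> y^2 + a1*x*y + a3*y = x^3 + a2*x^2 + a4*x + a6)"

text \<open>Group law (Silverman, Alg. III.2.3).\<close>
definition ec_add :: "ept \<Rightarrow> ept \<Rightarrow> ept" where
  "ec_add P Q = (case P of None \<Rightarrow> Q | Some (x1, y1) \<Rightarrow>
     (case Q of None \<Rightarrow> P | Some (x2, y2) \<Rightarrow>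
       (if x1 = x2 \<and> y1 + y2 + a1*x2 + a3 = 0 then None
        else (let l = (if x1 \<noteq> x2 then (y2 - y1) / (x2 - x1)
                       else (3*x1^2 + 2*a2*x1 + a4 - a1*y1) / (2*y1 + a1*x1 + a3));
                  nu = y1 - l*x1;
                  x3 = l^2 + a1*l - a2 - x1 - x2;
                  y3 = -(l + a1)*x3 - nu - a3
              in Some (x3, y3)))))"

definition ec_double :: "ept \<Rightarrow> ept" where
  "ec_double P = ec_add P P"

definition padic_val :: "nat \<Rightarrow> rat \<Rightarrow> int" where
  "padic_val p x = (case quotient_of x of (a, b) \<Rightarrow>
     int (multiplicity (int p) a) - int (multiplicity (int p) b))"

definition padic_abs :: "nat \<Rightarrow> rat \<Rightarrow> real" where
  "padic_abs p x = (if x = 0 then 0 else real p powr (- real_of_int (padic_val p x)))"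

definition Ht :: "rat \<Rightarrow> real" where
  "Ht x = max 1 \<bar>real_of_rat x\<bar> *
          Prod_any (\<lambda>p::nat. if prime p then max 1 (padic_abs p x) else 1)"

definition ht :: "rat \<Rightarrow> real" where
  "ht x = ln (Ht x)"

text \<open>h_X(P); X has its pole at infinity, convention h_X(O) = 0.\<close>
definition hX :: "ept \<Rightarrow> real" where
  "hX P = (case P of None \<Rightarrow> 0 | Some (x, y) \<Rightarrow> ht x)"

text \<open>h_t(P) for t = Y - 11/X (only meaningful when X(P) \<noteq> 0).\<close>
definition t_fun :: "ept \<Rightarrow> rat" where
  "t_fun P = (case P of None \<Rightarrow> 0 | Some (x, y) \<Rightarrow> y - 11 / x)"

definition h_t :: "ept \<Rightarrow> real" where
  "h_t P = ht (t_fun P)"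

text \<open>Canonical height (Silverman normalization), f = X, deg X = 2.\<close>
definition canon_height :: "ept \<Rightarrow> real" where
  "canon_height P = (1 / 2) * lim (\<lambda>n. hX ((ec_double ^^ n) P) / 4 ^ n)"

end

theory Submission
  imports Defs
begin


lemma prodpf:
  fixes m :: int assumes "m > 0"
  shows "Prod_any (\<lambda>p::nat. if prime p then real p ^ multiplicity (int p) m else 1) = real_of_int m"
proof -
  let ?g = "\<lambda>p::nat. if prime p then real p ^ multiplicity (int p) m else 1"
  let ?A = "nat ` prime_factors m"
  have fin: "finite ?A" by simp
  have sub: "{p. ?g p \<noteq> 1} \<subseteq> ?A"
  proof
    fix p assume "p \<in> {p. ?g p \<noteq> 1}"
    then have pp: "prime p" and "multiplicity (int p) m > 0"
      by (auto split: if_splits intro: gr0I)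
    then have "int p \<in> prime_factors m"
      by (simp add: prime_factors_multiplicity)
    then show "p \<in> ?A" by (metis image_eqI nat_int)
  qed
  have "Prod_any ?g = prod ?g ?A"
    using Prod_any.expand_superset[OF fin sub] .
  also have "\<dots> = prod (?g \<circ> nat) (prime_factors m)"
    by (rule prod.reindex) (auto intro!: inj_onI simp: in_prime_factors_iff dest!: prime_gt_0_int)
  also have "\<dots> = prod (\<lambda>p. real_of_int (p ^ multiplicity p m)) (prime_factors m)"
  proof (rule prod.cong)
    fix p assume "p \<in> prime_factors m"
    then have "prime p" "p > 0" by (auto simp: in_prime_factors_iff prime_gt_0_int)
    then show "(?g \<circ> nat) p = real_of_int (p ^ multiplicity p m)"
      by (simp add: prime_nat_iff_prime)
  qed simp
  also have "\<dots> = real_of_int (\<Prod>p\<in>prime_factors m. p ^ multiplicity p m)" by simp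
  also have "\<dots> = real_of_int m" using assms by (simp add: prod_prime_factors)
  finally show ?thesis .
qed

lemma local_factor:
  assumes qo: "quotient_of q = (n, d)" and pp: "prime p"
  shows "max 1 (padic_abs p q) = real p ^ multiplicity (int p) d"
proof (cases "q = 0")
  case True
  then have "d = 1" using qo by simp
  then show ?thesis using True by (simp add: padic_abs_def)
next
  case False
  have cop: "coprime n d" using quotient_of_coprime[OF qo] .
  have dpos: "d > 0" using quotient_of_denom_pos[OF qo] .
  have ip: "prime (int p)" using pp by (simp add: prime_nat_int_transfer)
  have p1: "real p > 1" using prime_gt_1_nat[OF pp] by simp
  have pv: "padic_val p q = int (multiplicity (int p) n) - int (multiplicity (int p) d)"
    by (simp add: padic_val_def qo)
  show ?thesis
  proof (cases "int p dvd d")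
    case True
    then have "\<not> int p dvd n" using cop ip
      by (metis coprime_common_divisor not_prime_unit coprime_commute)
    then have "multiplicity (int p) n = 0" by (simp add: not_dvd_imp_multiplicity_0)
    then have "padic_abs p q = real p powr real (multiplicity (int p) d)"
      using False by (simp add: padic_abs_def pv)
    also have "\<dots> = real p ^ multiplicity (int p) d" using p1 by (simp add: powr_realpow)
    finally show ?thesis using p1 by (simp add: max_def)
  next
    case False': False
    then have "multiplicity (int p) d = 0" by (simp add: not_dvd_imp_multiplicity_0)
    then have "padic_abs p q = real p powr (- real (multiplicity (int p) n))"
      using False by (simp add: padic_abs_def pv)
    also have "\<dots> \<le> 1" 
    proof -
      have "1 \<le> real p powr real (multiplicity (int p) n)"
        using p1 by (intro ge_one_powr_ge_zero) auto
      then show ?thesis by (simp add: powr_minus inverse_le_1_iff)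
    qed
    finally show ?thesis using \<open>multiplicity (int p) d = 0\<close> by simp
  qed
qed

lemma Ht_eq:
  assumes qo: "quotient_of q = (n, d)"
  shows "Ht q = max 1 \<bar>real_of_rat q\<bar> * real_of_int d"
proof -
  have "(\<lambda>p::nat. if prime p then max 1 (padic_abs p q) else 1)
      = (\<lambda>p::nat. if prime p then real p ^ multiplicity (int p) d else 1)"
    using local_factor[OF qo] by auto
  then show ?thesis
    using prodpf[of d] quotient_of_denom_pos[OF qo] by (simp only: Ht_def)
qed

lemma den_dvd:
  assumes qo: "quotient_of q = (n, d)" and M: "q * of_int M = of_int N"
  shows "d dvd M"
proof -
  have dpos: "d > 0" using quotient_of_denom_pos[OF qo] .
  have "q = of_int n / of_int d" using quotient_of_div[OF qo] .
  with M have "of_int n * of_int M = (of_int N * of_int d :: rat)" using dpos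
    by (simp add: field_simps)
  then have "n * M = N * d" by (metis of_int_eq_iff of_int_mult)
  then have "d dvd n * M" by simp
  then show ?thesis using quotient_of_coprime[OF qo]
    by (metis coprime_commute coprime_dvd_mult_right_iff)
qed

lemma Ht_upper:
  assumes M: "q * of_int M = of_int N" and M0: "M \<noteq> 0"
  shows "Ht q \<le> max \<bar>real_of_int N\<bar> \<bar>real_of_int M\<bar>"
proof -
  obtain n d where qo: "quotient_of q = (n, d)" by (cases "quotient_of q")
  have dpos: "d > 0" using quotient_of_denom_pos[OF qo] .
  have "d dvd M" using den_dvd[OF qo M] .
  then have "d \<le> \<bar>M\<bar>" using dvd_imp_le_int[OF M0] dpos by fastforce
  then have dle: "real_of_int d \<le> \<bar>real_of_int M\<bar>" by linarith
  have qM: "real_of_rat q * real_of_int M = real_of_int N"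
    using arg_cong[OF M, of real_of_rat] by (simp add: of_rat_mult)
  have "Ht q = max 1 \<bar>real_of_rat q\<bar> * real_of_int d" using Ht_eq[OF qo] .
  also have "\<dots> \<le> max 1 \<bar>real_of_rat q\<bar> * \<bar>real_of_int M\<bar>"
    using dle by (intro mult_left_mono) auto
  also have "\<dots> = max \<bar>real_of_int M\<bar> \<bar>real_of_int N\<bar>"
  proof -
    have "max 1 \<bar>real_of_rat q\<bar> * \<bar>real_of_int M\<bar> = max \<bar>real_of_int M\<bar> (\<bar>real_of_rat q\<bar> * \<bar>real_of_int M\<bar>)"
      by (simp add: max_mult_distrib_right)
    also have "\<bar>real_of_rat q\<bar> * \<bar>real_of_int M\<bar> = \<bar>real_of_int N\<bar>"
      by (subst abs_mult[symmetric], subst qM) simp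
    finally show ?thesis .
  qed
  finally show ?thesis by (simp add: max.commute)
qed

lemma Ht_lower:
  assumes M: "q * of_int M = of_int N" and cop: "coprime N f" and fM: "f dvd M" and fpos: "f > 0"
  shows "max 1 \<bar>real_of_rat q\<bar> * real_of_int f \<le> Ht q"
proof -
  obtain n d where qo: "quotient_of q = (n, d)" by (cases "quotient_of q")
  have dpos: "d > 0" using quotient_of_denom_pos[OF qo] .
  have "q = of_int n / of_int d" using quotient_of_div[OF qo] .
  with M have "of_int n * of_int M = (of_int N * of_int d :: rat)" using dpos
    by (simp add: field_simps)
  then have "n * M = N * d" by (metis of_int_eq_iff of_int_mult)
  moreover have "f dvd n * M" using fM by simp
  ultimately have "f dvd N * d" by simp
  then have "f dvd d" using cop by (metis coprime_commute coprime_dvd_mult_right_iff)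
  then have "f \<le> d" using dpos by (simp add: zdvd_imp_le)
  then have "real_of_int f \<le> real_of_int d" by simp
  then show ?thesis unfolding Ht_eq[OF qo] by (intro mult_left_mono) auto
qed

lemma on_curve_Some: "on_curve (Some (x, y)) \<longleftrightarrow> y^2 + 11*y = x^3 + 11*x^2 + 33*x"
  by (simp add: on_curve_def a1_def a2_def a3_def a4_def a6_def)

lemma cop_add: "coprime (e::int) u \<Longrightarrow> coprime e (u + e*k)"
proof (rule coprimeI)
  fix c assume "coprime e u" "c dvd e" "c dvd u + e*k"
  moreover have "c dvd e*k" using \<open>c dvd e\<close> by simp
  ultimately have "c dvd u" by (metis dvd_add_left_iff)
  then show "is_unit c" using \<open>coprime e u\<close> \<open>c dvd e\<close> coprime_common_divisor by blast
qed

lemma den_rel: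
  assumes C: "y^2 + 11*y = x^3 + 11*x^2 + 33*(x::rat)"
    and qx: "quotient_of x = (a, e)" and qy: "quotient_of y = (b, f)"
  shows "e^3 = f^2"
proof -
  have epos: "e > 0" using quotient_of_denom_pos[OF qx] .
  have fpos: "f > 0" using quotient_of_denom_pos[OF qy] .
  have ce: "coprime a e" using quotient_of_coprime[OF qx] .
  have cf: "coprime b f" using quotient_of_coprime[OF qy] .
  have x: "x = of_int a / of_int e" using quotient_of_div[OF qx] .
  have y: "y = of_int b / of_int f" using quotient_of_div[OF qy] .
  have "(of_int (e^3 * (b^2 + 11*b*f)) :: rat) = of_int (f^2 * (a^3 + 11*a^2*e + 33*a*e^2))"
    using C epos fpos unfolding x y by (simp add: field_simps power2_eq_square power3_eq_cube)
  then have E: "e^3 * (b^2 + 11*b*f) = f^2 * (a^3 + 11*a^2*e + 33*a*e^2)"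
    by (simp only: of_int_eq_iff)
  have c1: "coprime (e^3) (a^3 + 11*a^2*e + 33*a*e^2)"
  proof -
    have "a^3 + 11*a^2*e + 33*a*e^2 = a^3 + e * (11*a^2 + 33*a*e)" by (simp add: algebra_simps power2_eq_square)
    moreover have "coprime e (a^3 + e * (11*a^2 + 33*a*e))"
      using ce by (intro cop_add) (simp add: coprime_commute)
    ultimately show ?thesis by (simp add: add.assoc)
  qed
  have c2: "coprime (f^2) (b^2 + 11*b*f)"
  proof -
    have eq: "b^2 + 11*b*f = b^2 + f * (11*b)" by (simp add: algebra_simps)
    have "coprime f (b^2 + f * (11*b))"
      using cf by (intro cop_add) (simp add: coprime_commute)
    then have "coprime f (b^2 + 11*b*f)" by (simp only: eq)
    then show ?thesis by simp
  qed
  have d1: "e^3 dvd f^2"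
  proof -
    have "e^3 dvd f^2 * (a^3 + 11*a^2*e + 33*a*e^2)" using E by (metis dvd_triv_left)
    then show ?thesis using c1 by (simp add: coprime_dvd_mult_left_iff)
  qed
  have d2: "f^2 dvd e^3"
  proof -
    have "f^2 dvd e^3 * (b^2 + 11*b*f)" using E by (metis dvd_triv_left)
    then show ?thesis using c2 by (simp add: coprime_dvd_mult_left_iff)
  qed
  show ?thesis using d1 d2 epos fpos by (simp add: zdvd_antisym_nonneg)
qed

lemma dbl_curve_aux:
  fixes x y l :: rat
  assumes C: "y^2 + 11*y = x^3 + 11*x^2 + 33*x"
    and L: "l * (2*y + 11) = 3*x^2 + 22*x + 33"
  shows "(-l*(l^2 - 11 - 2*x) - (y - l*x) - 11)^2 + 11*(-l*(l^2 - 11 - 2*x) - (y - l*x) - 11)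
       = (l^2 - 11 - 2*x)^3 + 11*(l^2 - 11 - 2*x)^2 + 33*(l^2 - 11 - 2*x)"
  using C L by algebra

lemma no_2tors:
  assumes C: "y^2 + 11*y = x^3 + 11*x^2 + 33*(x::rat)"
  shows "2*y + 11 \<noteq> 0"
proof
  assume h: "2*y + 11 = 0"
  obtain a e where qx: "quotient_of x = (a, e)" by (cases "quotient_of x")
  obtain b f where qy: "quotient_of y = (b, f)" by (cases "quotient_of y")
  have ef: "e^3 = f^2" using den_rel[OF C qx qy] .
  have epos: "e > 0" using quotient_of_denom_pos[OF qx] .
  have fpos: "f > 0" using quotient_of_denom_pos[OF qy] .
  have "y * of_int 2 = of_int (-11)" using h by (simp add: algebra_simps)
  then have "f dvd 2" using den_dvd[OF qy] by blast
  then have "f \<le> 2" by (simp add: zdvd_imp_le)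
  then have f12: "f = 1 \<or> f = 2" using fpos by auto
  show False
  proof (cases "f = 1")
    case True
    have "y = of_int b" using quotient_of_div[OF qy] True by simp
    then have "(of_int (2 * b + 11) :: rat) = 0" using h by simp
    then have "2 * b + 11 = 0" by (simp only: of_int_eq_0_iff)
    then show False by presburger
  next
    case False
    then have "e^3 = 4" using f12 ef by auto
    moreover have "e = 1 \<or> e \<ge> 2" using epos by auto
    moreover have "e \<ge> 2 \<Longrightarrow> e^3 \<ge> 2^3" by (intro power_mono) auto
    ultimately show False by auto
  qed
qed

definition psi :: "rat \<Rightarrow> rat" where "psi x = 4*x^3 + 44*x^2 + 132*x + 121"
definition phi :: "rat \<Rightarrow> rat" where "phi x = x^4 - 66*x^2 - 242*x - 242"

lemma dbl:
  assumes C: "y^2 + 11*y = x^3 + 11*x^2 + 33*(x::rat)"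
  shows "\<exists>x' y'. ec_double (Some (x, y)) = Some (x', y') \<and>
           y'^2 + 11*y' = x'^3 + 11*x'^2 + 33*x' \<and> psi x \<noteq> 0 \<and> x' * psi x = phi x"
proof -
  have w: "2*y + 11 \<noteq> 0" using no_2tors[OF C] .
  define l where "l = (3*x^2 + 2*11*x + 33 - 0*y) / (2*y + 0*x + 11)"
  have L: "l * (2*y + 11) = 3*x^2 + 22*x + 33" using w by (simp add: l_def)
  define x' where "x' = l^2 + 0*l - 11 - x - x"
  define y' where "y' = -(l + 0)*x' - (y - l*x) - 11"
  have E: "ec_double (Some (x, y)) = Some (x', y')"
  proof -
    have nc: "\<not> (x = x \<and> y + y + a1*x + a3 = 0)" using w by (simp add: a1_def a3_def)
    show ?thesis
      unfolding ec_double_def ec_add_def option.case prod.case if_not_P[OF nc] Let_def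
      by (simp add: x'_def y'_def l_def a1_def a2_def a3_def a4_def)
  qed
  have x'e: "x' = l^2 - 11 - 2*x" by (simp add: x'_def)
  have y'e: "y' = -l*(l^2 - 11 - 2*x) - (y - l*x) - 11" by (simp add: y'_def x'e)
  have CC: "y'^2 + 11*y' = x'^3 + 11*x'^2 + 33*x'"
    unfolding x'e y'e by (rule dbl_curve_aux[OF C L])
  have ps: "psi x = (2*y+11)^2" using C by (simp add: psi_def power2_eq_square algebra_simps)
  then have ps0: "psi x \<noteq> 0" using w by simp
  have "x' * psi x = phi x"
  proof -
    have "x' * psi x = l^2 * psi x - (11 + 2*x) * psi x"
      by (simp add: x'e algebra_simps)
    also have "l^2 * psi x = (l * (2*y+11))^2" by (simp add: ps power_mult_distrib)
    finally have "x' * psi x = (l * (2*y+11))^2 - (11 + 2*x) * psi x" .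
    also have "\<dots> = phi x" unfolding L psi_def phi_def by algebra
    finally show ?thesis .
  qed
  then show ?thesis using E CC ps0 by blast
qed

lemma arch:
  fixes x y :: real
  assumes C: "y^2 + 11*y = x^3 + 11*x^2 + 33*x" and x0: "x \<noteq> 0"
  shows "(max 1 \<bar>x\<bar>)^3 \<le> 4096 * (max 1 \<bar>y - 11/x\<bar>)^2"
proof -
  let ?t = "y - 11/x"
  have m1: "1 \<le> (max 1 \<bar>?t\<bar>)^2" by (simp add: one_le_power)
  have sq: "(y + 11/2)^2 = x^3 + 11*x^2 + 33*x + 121/4" using C by (simp add: power2_eq_square algebra_simps)
  show ?thesis
  proof (cases "\<bar>x\<bar> \<le> 16")
    case True
    then have "max 1 \<bar>x\<bar> \<le> 16" by simp
    then have "(max 1 \<bar>x\<bar>)^3 \<le> 16^3" by (intro power_mono) auto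
    then have "(max 1 \<bar>x\<bar>)^3 \<le> 4096" by simp
    then show ?thesis using m1 by linarith
  next
    case False
    have xpos: "x > 16"
    proof (rule ccontr)
      assume "\<not> x > 16"
      with False have xn: "x < -16" by simp
      then have "x * (x + 11) > 0" by (simp add: mult_neg_neg)
      then have "x^2 + 11*x + 33 > 33" by (simp add: power2_eq_square algebra_simps)
      then have wpos: "x^2 + 11*x + 33 > 33" .
      have "x * (x^2 + 11*x + 33) < -16 * (x^2 + 11*x + 33)"
        using xn wpos by (intro mult_strict_right_mono) auto
      also have "\<dots> < -16 * 33" using wpos by simp
      finally have "x * (x^2 + 11*x + 33) < -16 * 33" .
      then have "x^3 + 11*x^2 + 33*x + 121/4 < 0" by (simp add: power2_eq_square power3_eq_cube algebra_simps)
      with sq zero_le_power2[of "y + 11/2"] show False by linarith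
    qed
    define u where "u = \<bar>y + 11/2\<bar>"
    have u2: "u^2 = x^3 + 11*x^2 + 33*x + 121/4" using sq by (simp add: u_def)
    have "x^3 \<le> u^2" using u2 xpos by (simp add: power2_eq_square)
    have x3: "x^3 \<ge> 16^3" using xpos by (intro power_mono) auto
    have "u \<ge> 64"
    proof (rule ccontr)
      assume "\<not> u \<ge> 64"
      then have "u^2 < 64^2" using u_def by (intro power_strict_mono) auto
      with \<open>x^3 \<le> u^2\<close> x3 show False by simp
    qed
    have "\<bar>11/x\<bar> \<le> 1" using xpos by simp
    have "\<bar>?t\<bar> \<ge> u - 11/2 - \<bar>11/x\<bar>" unfolding u_def by linarith
    then have "\<bar>?t\<bar> \<ge> u / 2" using \<open>u \<ge> 64\<close> \<open>\<bar>11/x\<bar> \<le> 1\<close> by linarith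
    then have "(u/2)^2 \<le> \<bar>?t\<bar>^2" using \<open>u \<ge> 64\<close> by (intro power_mono) auto
    then have "x^3 \<le> 4 * \<bar>?t\<bar>^2" using \<open>x^3 \<le> u^2\<close> by (simp add: power_divide)
    also have "\<dots> \<le> 4096 * (max 1 \<bar>?t\<bar>)^2" by (intro mult_mono power_mono) auto
    finally show ?thesis using xpos by simp
  qed
qed

lemma Ht_ge1: "Ht q \<ge> 1"
proof -
  obtain n d where qo: "quotient_of q = (n, d)" by (cases "quotient_of q")
  have "d > 0" using quotient_of_denom_pos[OF qo] .
  then have "real_of_int d \<ge> 1" by simp
  moreover have "max 1 \<bar>real_of_rat q\<bar> \<ge> 1" by simp
  ultimately show ?thesis unfolding Ht_eq[OF qo] by (metis mult_mono' mult_1 zero_le_one)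
qed

lemma t_bound:
  assumes C: "y^2 + 11*y = x^3 + 11*x^2 + 33*(x::rat)" and x0: "x \<noteq> 0"
  shows "Ht x ^ 3 \<le> 4096 * Ht (y - 11/x) ^ 2"
proof -
  obtain a e where qx: "quotient_of x = (a, e)" by (cases "quotient_of x")
  obtain b f where qy: "quotient_of y = (b, f)" by (cases "quotient_of y")
  have ef: "e^3 = f^2" using den_rel[OF C qx qy] .
  have epos: "e > 0" using quotient_of_denom_pos[OF qx] .
  have fpos: "f > 0" using quotient_of_denom_pos[OF qy] .
  have ce: "coprime a e" using quotient_of_coprime[OF qx] .
  have cf: "coprime b f" using quotient_of_coprime[OF qy] .
  have xe: "x = of_int a / of_int e" using quotient_of_div[OF qx] .
  have ye: "y = of_int b / of_int f" using quotient_of_div[OF qy] .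
  have a0: "a \<noteq> 0" using x0 xe by auto
  have caf: "coprime a f"
  proof -
    have "coprime a (e^3)" using ce by simp
    then have "coprime a (f^2)" using ef by simp
    then show ?thesis by simp
  qed
  have cN: "coprime (a*b - 11*e*f) f"
  proof -
    have "coprime f (a*b)" using caf cf by (simp add: coprime_commute)
    then have "coprime f (a*b + f*(-11*e))" by (rule cop_add)
    moreover have "a*b + f*(-11*e) = a*b - 11*e*f" by (simp add: algebra_simps)
    ultimately have "coprime f (a*b - 11*e*f)" by (simp only:)
    then show ?thesis by (simp add: coprime_commute)
  qed
  have tM: "(y - 11/x) * of_int (a*f) = of_int (a*b - 11*e*f)"
    using a0 fpos epos unfolding xe ye by (simp add: field_simps)
  have low: "max 1 \<bar>real_of_rat (y - 11/x)\<bar> * real_of_int f \<le> Ht (y - 11/x)"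
    by (rule Ht_lower[OF tM cN _ fpos]) simp
  have Hx: "Ht x = max 1 \<bar>real_of_rat x\<bar> * real_of_int e" using Ht_eq[OF qx] .
  have Cr: "(real_of_rat y)^2 + 11*real_of_rat y = (real_of_rat x)^3 + 11*(real_of_rat x)^2 + 33*real_of_rat x"
    using arg_cong[OF C, of real_of_rat] by (simp add: of_rat_add of_rat_mult of_rat_power)
  have ar: "(max 1 \<bar>real_of_rat x\<bar>)^3 \<le> 4096 * (max 1 \<bar>real_of_rat y - 11/real_of_rat x\<bar>)^2"
    using arch[OF Cr] x0 by simp
  have rt: "real_of_rat (y - 11/x) = real_of_rat y - 11/real_of_rat x"
    by (simp add: of_rat_diff of_rat_divide)
  have efr: "(real_of_int e)^3 = (real_of_int f)^2" using arg_cong[OF ef, of real_of_int] by simp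
  have "Ht x ^ 3 = (max 1 \<bar>real_of_rat x\<bar>)^3 * (real_of_int f)^2"
    unfolding Hx by (simp add: power_mult_distrib efr)
  also have "\<dots> \<le> 4096 * (max 1 \<bar>real_of_rat (y - 11/x)\<bar>)^2 * (real_of_int f)^2"
    using ar rt by (intro mult_right_mono) auto
  also have "\<dots> = 4096 * (max 1 \<bar>real_of_rat (y - 11/x)\<bar> * real_of_int f)^2"
    by (simp add: power_mult_distrib)
  also have "\<dots> \<le> 4096 * Ht (y - 11/x) ^ 2"
    using low fpos by (intro mult_left_mono power_mono) auto
  finally show ?thesis .
qed

lemma mono_bound:
  fixes P Q M :: real
  assumes "\<bar>P\<bar> \<le> M" "\<bar>Q\<bar> \<le> M"
  shows "\<bar>P^i * Q^j\<bar> \<le> M^(i+j)"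
proof -
  have "\<bar>P^i * Q^j\<bar> = \<bar>P\<bar>^i * \<bar>Q\<bar>^j" by (simp add: abs_mult power_abs)
  also have "\<dots> \<le> M^i * M^j" using assms by (intro mult_mono power_mono) auto
  finally show ?thesis by (simp add: power_add)
qed

lemma dbl_height:
  assumes C: "y^2 + 11*y = x^3 + 11*x^2 + 33*(x::rat)"
    and xx: "x' * psi x = phi x" and ps0: "psi x \<noteq> 0"
  shows "Ht x' \<le> 551 * Ht x ^ 4"
proof -
  obtain p q where qx: "quotient_of x = (p, q)" by (cases "quotient_of x")
  have qpos: "q > 0" using quotient_of_denom_pos[OF qx] .
  have xe: "x = of_int p / of_int q" using quotient_of_div[OF qx] .
  define Phi where "Phi = p^4 - 66*p^2*q^2 - 242*p*q^3 - 242*q^4"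
  define Psi where "Psi = q*(4*p^3 + 44*p^2*q + 132*p*q^2 + 121*q^3)"
  have e1: "of_int Psi = (of_int q)^4 * psi x"
    using qpos unfolding Psi_def psi_def xe by (simp add: field_simps power2_eq_square power3_eq_cube power4_eq_xxxx)
  have e2: "of_int Phi = (of_int q)^4 * phi x"
    using qpos unfolding Phi_def phi_def xe by (simp add: field_simps power2_eq_square power3_eq_cube power4_eq_xxxx)
  have Psi0: "Psi \<noteq> 0" using e1 ps0 qpos by auto
  have M: "x' * of_int Psi = of_int Phi" unfolding e1 e2 using xx by (simp add: algebra_simps flip: xx)
  have H1: "Ht x' \<le> max \<bar>real_of_int Phi\<bar> \<bar>real_of_int Psi\<bar>" by (rule Ht_upper[OF M Psi0])
  define Mx where "Mx = max \<bar>real_of_int p\<bar> (real_of_int q)"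
  have HM: "Ht x = Mx"
  proof -
    have "Ht x = max 1 \<bar>real_of_rat x\<bar> * real_of_int q" using Ht_eq[OF qx] .
    also have "\<dots> = max (real_of_int q) (\<bar>real_of_rat x\<bar> * real_of_int q)"
      using qpos by (simp add: max_mult_distrib_right)
    also have "\<bar>real_of_rat x\<bar> * real_of_int q = \<bar>real_of_int p\<bar>"
      using qpos unfolding xe by (simp add: of_rat_divide abs_divide)
    finally show ?thesis by (simp add: Mx_def max.commute)
  qed
  let ?P = "real_of_int p" and ?Q = "real_of_int q"
  have bP: "\<bar>?P\<bar> \<le> Mx" and bQ: "\<bar>?Q\<bar> \<le> Mx" using qpos by (auto simp: Mx_def)
  note mb = mono_bound[OF bP bQ]
  have m40: "\<bar>?P^4 * ?Q^0\<bar> \<le> Mx^4" using mb[of 4 0] by simp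
  have m22: "\<bar>?P^2 * ?Q^2\<bar> \<le> Mx^4" using mb[of 2 2] by simp
  have m13: "\<bar>?P^1 * ?Q^3\<bar> \<le> Mx^4" using mb[of 1 3] by simp
  have m04: "\<bar>?P^0 * ?Q^4\<bar> \<le> Mx^4" using mb[of 0 4] by simp
  have m31: "\<bar>?P^3 * ?Q^1\<bar> \<le> Mx^4" using mb[of 3 1] by simp
  have ePhi: "real_of_int Phi = ?P^4 * ?Q^0 - 66*(?P^2 * ?Q^2) - 242*(?P^1*?Q^3) - 242*(?P^0*?Q^4)"
    by (simp add: Phi_def)
  have bPhi: "\<bar>real_of_int Phi\<bar> \<le> 551 * Mx^4"
    unfolding ePhi using m40 m22 m13 m04 by linarith
  have ePsi: "real_of_int Psi = 4*(?P^3 * ?Q^1) + 44*(?P^2 * ?Q^2) + 132*(?P^1*?Q^3) + 121*(?P^0*?Q^4)"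
    by (simp add: Psi_def algebra_simps power2_eq_square power3_eq_cube power4_eq_xxxx)
  have bPsi: "\<bar>real_of_int Psi\<bar> \<le> 551 * Mx^4"
    unfolding ePsi using m31 m22 m13 m04 by linarith
  show ?thesis using H1 bPhi bPsi HM by simp
qed

lemma orbit:
  assumes C: "y^2 + 11*y = x^3 + 11*x^2 + 33*(x::rat)"
  shows "\<exists>a b. (ec_double ^^ n) (Some (x, y)) = Some (a, b) \<and> b^2 + 11*b = a^3 + 11*a^2 + 33*a"
proof (induction n)
  case 0 then show ?case using C by auto
next
  case (Suc n)
  then obtain a b where ab: "(ec_double ^^ n) (Some (x, y)) = Some (a, b)" "b^2 + 11*b = a^3 + 11*a^2 + 33*a" by blast
  obtain a' b' where "ec_double (Some (a, b)) = Some (a', b')" "b'^2 + 11*b' = a'^3 + 11*a'^2 + 33*a'"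
    using dbl[OF ab(2)] by blast
  then show ?case using ab(1) by auto
qed

lemma ht_step:
  assumes C: "y^2 + 11*y = x^3 + 11*x^2 + 33*(x::rat)"
  shows "hX (ec_double (Some (x, y))) \<le> 4 * hX (Some (x, y)) + ln 551"
proof -
  obtain x' y' where d: "ec_double (Some (x, y)) = Some (x', y')" "psi x \<noteq> 0" "x' * psi x = phi x"
    using dbl[OF C] by blast
  have H: "Ht x' \<le> 551 * Ht x ^ 4" using dbl_height[OF C d(3) d(2)] .
  have p1: "Ht x' > 0" "Ht x > 0" using Ht_ge1[of x'] Ht_ge1[of x] by auto
  have "ln (Ht x') \<le> ln (551 * Ht x ^ 4)" using H p1 by simp
  also have "\<dots> = ln 551 + 4 * ln (Ht x)" using p1 by (simp add: ln_mult ln_realpow)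
  finally show ?thesis using d(1) by (simp add: hX_def ht_def)
qed

lemma hX_nonneg: "hX P \<ge> 0"
  using Ht_ge1 by (cases P) (auto simp: hX_def ht_def)

lemma canon_bound:
  assumes C: "y^2 + 11*y = x^3 + 11*x^2 + 33*(x::rat)"
  shows "canon_height (Some (x, y)) \<le> (ht x + ln 551 / 3) / 2"
proof -
  define Q where "Q n = (ec_double ^^ n) (Some (x, y))" for n
  define s where "s n = hX (Q n) / 4^n" for n
  define c where "c = ln 551 / (3::real)"
  define a where "a n = s n + c / 4^n" for n
  have step: "hX (Q (Suc n)) \<le> 4 * hX (Q n) + ln 551" for n
  proof -
    obtain u v where uv: "Q n = Some (u, v)" "v^2 + 11*v = u^3 + 11*u^2 + 33*u"
      using orbit[OF C, of n] unfolding Q_def by blast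
    have "Q (Suc n) = ec_double (Q n)" by (simp add: Q_def)
    then show ?thesis using ht_step[OF uv(2)] uv(1) by simp
  qed
  have dec: "decseq a"
  proof (rule decseq_SucI)
    fix n
    have "a (Suc n) = (hX (Q (Suc n)) + c) / 4^(Suc n)" by (simp add: a_def s_def add_divide_distrib)
    also have "\<dots> \<le> (4 * hX (Q n) + 4 * c) / 4^(Suc n)"
      using step[of n] by (intro divide_right_mono) (auto simp: c_def)
    also have "\<dots> = a n" by (simp add: a_def s_def add_divide_distrib)
    finally show "a (Suc n) \<le> a n" .
  qed
  have c0: "c \<ge> 0" by (simp add: c_def)
  have bnd: "\<forall>i. 0 \<le> a i" using hX_nonneg c0 by (simp add: a_def s_def)
  obtain L where L: "a \<longlonglongrightarrow> L" "\<forall>i. L \<le> a i" using decseq_convergent[OF dec bnd] by blast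
  have z: "(\<lambda>n. c / 4^n) \<longlonglongrightarrow> 0"
  proof -
    have "(\<lambda>n. c * (1/4::real)^n) \<longlonglongrightarrow> c * 0" by (intro tendsto_intros) simp
    moreover have "(\<lambda>n. c * (1/4::real)^n) = (\<lambda>n. c / 4^n)"
      by (simp add: power_one_over)
    ultimately show ?thesis by simp
  qed
  have "(\<lambda>n. a n - c / 4^n) \<longlonglongrightarrow> L - 0" using L(1) z by (intro tendsto_intros)
  then have "s \<longlonglongrightarrow> L" by (simp add: a_def)
  then have "lim s = L" by (rule limI)
  moreover have "a 0 = ht x + c" by (simp add: a_def s_def Q_def hX_def)
  ultimately have "lim s \<le> ht x + c" using L(2) by metis
  moreover have "canon_height (Some (x, y)) = (1/2) * lim s"
  proof -
    have "s = (\<lambda>n. hX ((ec_double ^^ n) (Some (x, y))) / 4 ^ n)"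
      by (rule ext) (simp add: s_def Q_def)
    then show ?thesis by (simp add: canon_height_def)
  qed
  ultimately show ?thesis by (simp add: c_def)
qed

theorem lemma2p2:
  fixes P :: ept
  assumes "on_curve P"
    and "P \<noteq> None"
    and "P \<noteq> Some (0, 0)"
    and "P \<noteq> Some (0, -11)"
  shows "canon_height P \<le> (1/3) * h_t P + 4.52"
proof -
  obtain x y where P: "P = Some (x, y)" using assms(2) by auto
  have C: "y^2 + 11*y = x^3 + 11*x^2 + 33*x" using assms(1) P on_curve_Some by simp
  have x0: "x \<noteq> 0"
  proof
    assume "x = 0"
    then have "y * (y + 11) = 0" using C by (simp add: power2_eq_square algebra_simps)
    then have "y = 0 \<or> y = -11" by auto
    then show False using assms(3,4) P \<open>x = 0\<close> by auto
  qed
  have cb: "canon_height P \<le> (ht x + ln 551 / 3) / 2" using canon_bound[OF C] P by simp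
  have tb: "Ht x ^ 3 \<le> 4096 * Ht (y - 11/x) ^ 2" using t_bound[OF C x0] .
  have p1: "Ht x > 0" "Ht (y - 11/x) > 0" using Ht_ge1 by (auto intro: less_le_trans[OF zero_less_one])
  have "3 * ht x = ln (Ht x ^ 3)" using p1 by (simp add: ht_def ln_realpow)
  also have "\<dots> \<le> ln (4096 * Ht (y - 11/x) ^ 2)" using tb p1 by simp
  also have "\<dots> = ln 4096 + 2 * ht (y - 11/x)" using p1 by (simp add: ht_def ln_mult ln_realpow)
  finally have h3: "3 * ht x \<le> ln 4096 + 2 * ht (y - 11/x)" .
  have l1: "ln (4096::real) = 12 * ln 2"
    using ln_realpow[of "2::real" 12] by simp
  have l2: "ln (551::real) \<le> 10 * ln 2"
  proof -
    have a: "ln (551::real) \<le> ln 1024" by simp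
    have b: "ln (1024::real) = 10 * ln 2" using ln_realpow[of "2::real" 10] by simp
    show ?thesis using a b by linarith
  qed
  have l3: "ln (2::real) < 1" by (rule ln_2_less_1)
  have ht_t: "h_t P = ht (y - 11/x)" by (simp add: P h_t_def t_fun_def)
  have "canon_height P \<le> (ht x + ln 551 / 3) / 2" by (rule cb)
  also have "\<dots> \<le> (1/3) * ht (y - 11/x) + 4.52" 
  proof -
    have n: "(4.52::real) = 113/25" by simp
    have k: "3 * ht x + ln 551 \<le> 2 * ht (y - 11/x) + 22 * ln 2" using h3 l1 l2 by linarith
    have k2: "22 * ln (2::real) \<le> 22" using l3 by linarith
    show ?thesis unfolding n using k k2 by (simp add: field_simps)
  qed
  finally show ?thesis unfolding ht_t .
qed
end
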